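(* Let $L$ be a sublattice of $A_2$ of rank $2$. Then there exist $b_0,b_1\in L$ forming a basis of $L$ such that, with $b_2=-b_0-b_1$, the $3\times3$ matrix with rows $b_0,b_1,b_2$ has all off-diagonal entries $\le 0$. (Equivalently, $L$ is the Laplacian lattice of a regular digraph on three vertices.)
   Context: $A_2=\{x\in\mathbb Z^3:x_0+x_1+x_2=0\}$. A regular digraph is a directed multigraph in which each vertex has equal in-degree and out-degree; its Laplacian lattice is the lattice generated by the rows of its Laplacian matrix, which has the out-degrees on the diagonal and $-($number of arcs between the corresponding vertices$)$ off the diagonal. *)

theory Defs
  imports "HOL-Analysis.Analysis"
begin

text \<open>Vectors of Z^3 are modelled as int^3; paper coordinates x_0,x_1,x_2 are x$1,x$2,x$3.\<close>

definition A2 :: "(int^3) set" where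
  "A2 = {x. x$1 + x$2 + x$3 = 0}"

definition is_sublattice :: "(int^3) set \<Rightarrow> bool" where
  "is_sublattice L \<longleftrightarrow> 0 \<in> L \<and> (\<forall>x\<in>L. \<forall>y\<in>L. x + y \<in> L) \<and> (\<forall>x\<in>L. - x \<in> L)"

definition has_rank2 :: "(int^3) set \<Rightarrow> bool" where
  "has_rank2 L \<longleftrightarrow> (\<exists>u\<in>L. \<exists>v\<in>L. \<forall>m n :: int. m *s u + n *s v = 0 \<longrightarrow> m = 0 \<and> n = 0)"

definition is_basis2 :: "(int^3) set \<Rightarrow> int^3 \<Rightarrow> int^3 \<Rightarrow> bool" where
  "is_basis2 L b0 b1 \<longleftrightarrow> b0 \<in> L \<and> b1 \<in> L \<and>
     (\<forall>x\<in>L. \<exists>!mn :: int \<times> int. x = fst mn *s b0 + snd mn *s b1)"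

end

theory Submission
  imports Defs
begin

definition det2 :: "int^3 \<Rightarrow> int^3 \<Rightarrow> int" where
  "det2 u v = u$2 * v$3 - u$3 * v$2"

lemma vec3_eq: "(x::int^3) = y \<longleftrightarrow> x$1 = y$1 \<and> x$2 = y$2 \<and> x$3 = y$3"
  by (simp add: vec_eq_iff forall_3)

lemma A2D: "x \<in> A2 \<Longrightarrow> x$1 = - x$2 - x$3"
  by (simp add: A2_def)

lemma sl_add: "is_sublattice L \<Longrightarrow> x \<in> L \<Longrightarrow> y \<in> L \<Longrightarrow> x + y \<in> L"
  by (simp add: is_sublattice_def)
lemma sl_neg: "is_sublattice L \<Longrightarrow> x \<in> L \<Longrightarrow> - x \<in> L"
  by (simp add: is_sublattice_def)
lemma sl_diff: "is_sublattice L \<Longrightarrow> x \<in> L \<Longrightarrow> y \<in> L \<Longrightarrow> x - y \<in> L"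
  using sl_add[of L x "-y"] sl_neg[of L y] by simp

lemma sl_smult_nat: "is_sublattice L \<Longrightarrow> x \<in> L \<Longrightarrow> (int n) *s x \<in> L"
proof (induction n)
  case 0 then show ?case by (simp add: is_sublattice_def)
next
  case (Suc n)
  have "int (Suc n) *s x = int n *s x + x" by (simp add: vec_eq_iff algebra_simps)
  then show ?case using Suc sl_add by metis
qed

lemma sl_smult: assumes "is_sublattice L" "x \<in> L" shows "k *s x \<in> L"
proof (cases "k \<ge> 0")
  case True
  then have "k = int (nat k)" by simp
  then show ?thesis using sl_smult_nat[OF assms, of "nat k"] by metis
next
  case False
  then have k: "k = - int (nat (-k))" by simp
  have "k *s x = - (int (nat (-k)) *s x)" by (subst k, simp add: vec_eq_iff)
  then show ?thesis using sl_neg[OF assms(1) sl_smult_nat[OF assms, of "nat (-k)"]] by simp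
qed

lemma rank_det:
  assumes "L \<subseteq> A2" "has_rank2 L"
  shows "\<exists>u\<in>L. \<exists>v\<in>L. det2 u v \<noteq> 0"
proof (rule ccontr)
  assume H: "\<not> ?thesis"
  obtain u v where uv: "u \<in> L" "v \<in> L" and ind: "\<forall>m n :: int. m *s u + n *s v = 0 \<longrightarrow> m = 0 \<and> n = 0"
    using assms(2) unfolding has_rank2_def by blast
  have "det2 u v = 0" using H uv by blast
  then have d: "u$2 * v$3 - u$3 * v$2 = 0" unfolding det2_def .
  have u1: "u$1 = - u$2 - u$3" using uv(1) assms(1) A2D by blast
  have v1: "v$1 = - v$2 - v$3" using uv(2) assms(1) A2D by blast
  have key: "m *s u + n *s v = 0" if h2: "m * u$2 + n * v$2 = 0" and h3: "m * u$3 + n * v$3 = 0" for m n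
  proof -
    have c1: "(m *s u + n *s v)$1 = -(m * u$2 + n * v$2) - (m * u$3 + n * v$3)"
      by (simp add: u1 v1 algebra_simps)
    have "(m *s u + n *s v)$1 = 0" using c1 h2 h3 by simp
    moreover have "(m *s u + n *s v)$2 = 0" using h2 by simp
    moreover have "(m *s u + n *s v)$3 = 0" using h3 by simp
    ultimately show ?thesis by (simp add: vec3_eq)
  qed
  show False
  proof (cases "u$2 = 0 \<and> v$2 = 0")
    case True
    show ?thesis
    proof (cases "u$3 = 0 \<and> v$3 = 0")
      case True2: True
      have "1 *s u + 0 *s v = 0" using True True2 key[of 1 0] by simp
      then show ?thesis using ind[rule_format, of 1 0] by simp
    next
      case False
      have e: "v$3 *s u + (- u$3) *s v = 0" using True by (intro key) (auto simp: algebra_simps)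
      show ?thesis using ind[rule_format, OF e] False by simp
    qed
  next
    case False
    have e: "v$2 *s u + (- u$2) *s v = 0" using d by (intro key) (auto simp: algebra_simps)
    show ?thesis using ind[rule_format, OF e] False by simp
  qed
qed

lemma sign_lemma:
  fixes a b s t :: int
  assumes "a \<le> 0" "b \<le> 0" "a + b < 0" "a * t - b * s = 0" "s + t \<le> 0"
  shows "s \<le> 0 \<and> t \<le> 0"
proof (rule ccontr)
  assume "\<not> ?thesis"
  then consider "s > 0" | "t > 0" by linarith
  then show False
  proof cases
    case 1
    then have "t < 0" using assms by linarith
    have "a * t \<ge> 0" using `t<0` assms(1) by (simp add: mult_nonpos_nonpos)
    moreover have "b * s \<le> 0" using 1 assms(2) by (simp add: mult_nonpos_nonneg)
    ultimately have "a * t = 0" "b * s = 0" using assms(4) by linarith+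
    then show False using 1 `t<0` assms(3) by simp
  next
    case 2
    then have "s < 0" using assms by linarith
    have "b * s \<ge> 0" using `s<0` assms(2) by (simp add: mult_nonpos_nonpos)
    moreover have "a * t \<le> 0" using 2 assms(1) by (simp add: mult_nonpos_nonneg)
    ultimately have "a * t = 0" "b * s = 0" using assms(4) by linarith+
    then show False using 2 `s<0` assms(3) by simp
  qed
qed

lemma det2_simps:
  "det2 b (x + y) = det2 b x + det2 b y"
  "det2 b (x - y) = det2 b x - det2 b y"
  "det2 b (k *s x) = k * det2 b x"
  "det2 b (- x) = - det2 b x"
  "det2 b b = 0"
  by (simp_all add: det2_def algebra_simps)

lemma basis_lemma:
  assumes S: "is_sublattice L" and A: "L \<subseteq> A2"
    and b0: "b0 \<in> L" "b0$2 \<le> 0" "b0$3 \<le> 0" "b0$2 + b0$3 < 0"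
    and minh: "\<forall>w\<in>L. w$2 \<le> 0 \<longrightarrow> w$3 \<le> 0 \<longrightarrow> w$2 + w$3 < 0 \<longrightarrow> -(b0$2+b0$3) \<le> -(w$2+w$3)"
    and y: "y \<in> L" "det2 b0 y > 0"
    and minD: "\<forall>z\<in>L. det2 b0 z \<noteq> 0 \<longrightarrow> det2 b0 y \<le> \<bar>det2 b0 z\<bar>"
  shows "is_basis2 L b0 y"
  unfolding is_basis2_def
proof (intro conjI ballI b0 y)
  fix z assume z: "z \<in> L"
  define D where "D = det2 b0 y"
  define k where "k = det2 b0 z div D"
  define z1 where "z1 = z - k *s y"
  have z1L: "z1 \<in> L" unfolding z1_def by (rule sl_diff[OF S z sl_smult[OF S y(1)]])
  have dm: "det2 b0 z1 = det2 b0 z mod D"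
    unfolding z1_def k_def D_def by (simp add: det2_simps minus_mult_div_eq_mod minus_div_mult_eq_mod)
  have dm2: "det2 b0 z mod D \<ge> 0" "det2 b0 z mod D < D" using y D_def by auto
  have dz1: "det2 b0 z1 = 0"
  proof (rule ccontr)
    assume "det2 b0 z1 \<noteq> 0"
    then have "D \<le> \<bar>det2 b0 z1\<bar>" using minD z1L D_def by blast
    then show False using dm dm2 by simp
  qed
  define h where "h = -(b0$2 + b0$3)"
  have hpos: "h > 0" using b0 h_def by simp
  define j where "j = (-(z1$2 + z1$3)) div h"
  define w where "w = z1 - j *s b0"
  have wL: "w \<in> L" unfolding w_def by (rule sl_diff[OF S z1L sl_smult[OF S b0(1)]])
  have gw: "-(w$2 + w$3) = (-(z1$2 + z1$3)) mod h"
    unfolding w_def j_def h_def by (simp add: algebra_simps minus_div_mult_eq_mod[symmetric])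
  have g0: "-(w$2 + w$3) \<ge> 0" "-(w$2 + w$3) < h" using gw hpos by auto
  have dw: "det2 b0 w = 0" unfolding w_def using dz1 by (simp add: det2_simps)
  have sw: "w$2 \<le> 0 \<and> w$3 \<le> 0"
    using sign_lemma[of "b0$2" "b0$3" "w$3" "w$2"] b0 dw g0 by (simp add: det2_def algebra_simps)
  have "w$2 + w$3 = 0"
  proof (rule ccontr)
    assume "w$2 + w$3 \<noteq> 0"
    then have "w$2 + w$3 < 0" using g0 by linarith
    then have "-(b0$2+b0$3) \<le> -(w$2+w$3)" using minh wL sw by blast
    then show False using g0 h_def by linarith
  qed
  then have w23: "w$2 = 0" "w$3 = 0" using sw by auto
  have w1: "w$1 = 0" using A2D[of w] wL A w23 by auto
  have zeq: "z = j *s b0 + k *s y"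
  proof -
    have "w = 0" using w1 w23 by (simp add: vec3_eq)
    then show ?thesis unfolding w_def z1_def by (simp add: algebra_simps)
  qed
  show "\<exists>!mn. z = fst mn *s b0 + snd mn *s y"
  proof (rule ex1I[of _ "(j,k)"])
    show "z = fst (j, k) *s b0 + snd (j, k) *s y" using zeq by simp
  next
    fix mn assume H: "z = fst mn *s b0 + snd mn *s y"
    obtain a c where mn: "mn = (a,c)" by (cases mn)
    have e: "a *s b0 + c *s y = j *s b0 + k *s y" using H zeq mn by simp
    have "det2 b0 (a *s b0 + c *s y) = det2 b0 (j *s b0 + k *s y)" using e by simp
    then have "c * D = k * D" by (simp add: det2_simps D_def)
    then have ck: "c = k" using y D_def by simp
    then have "a *s b0 = j *s b0" using e by simp
    then have "a * b0$2 = j * b0$2" "a * b0$3 = j * b0$3" by (metis vector_smult_component)+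
    then have "a = j" using b0(4) by auto
    then show "mn = (j,k)" using mn ck by simp
  qed
qed

lemma det_zero_lemma:
  assumes "b0$2 + b0$3 < (0::int)" "det2 b0 u = 0" "det2 b0 v = 0"
  shows "det2 u v = 0"
proof -
  have e1: "b0$2  *  u$3 = b0$3  *  u$2" and e2: "b0$2  *  v$3 = b0$3  *  v$2" using assms by (simp_all add: det2_def)
  have "b0$2  *  det2 u v = u$2 * ( b0$2 * v$3) - ( b0$2 * u$3) * v$2" by (simp add: det2_def algebra_simps)
  also have "\<dots> = u$2 * ( b0$3 * v$2) - ( b0$3 * u$2) * v$2" using e1 e2 by simp
  also have "\<dots> = 0" by (simp add: algebra_simps)
  finally have 1: "b0$2  *  det2 u v = 0" .
  have "b0$3  *  det2 u v = ( b0$3 * u$2) * v$3 - u$3 * ( b0$3 * v$2)" by (simp add: det2_def algebra_simps)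
  also have "\<dots> = ( b0$2 * u$3) * v$3 - u$3 * ( b0$2 * v$3)" using e1 e2 by simp
  also have "\<dots> = 0" by (simp add: algebra_simps)
  finally have 2: "b0$3  *  det2 u v = 0" .
  show ?thesis using 1 2 assms(1) by auto
qed

theorem mainTheorem17:
  fixes L :: "(int^3) set"
  assumes "is_sublattice L" and "L \<subseteq> A2" and "has_rank2 L"
  shows "\<exists>b0 b1. is_basis2 L b0 b1 \<and>
           (let b = (\<lambda>k::3. if k = 1 then b0 else if k = 2 then b1 else - b0 - b1)
            in \<forall>i j :: 3. i \<noteq> j \<longrightarrow> b i $ j \<le> 0)"
proof -
  note S = assms(1) and A = assms(2)
  obtain u v where uv: "u \<in> L" "v \<in> L" "det2 u v \<noteq> 0" using rank_det assms(2,3) by blast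
  define z0 where "z0 = (v$3) *s u - (u$3) *s v"
  have z0L: "z0 \<in> L" unfolding z0_def by (rule sl_diff[OF S sl_smult[OF S uv(1)] sl_smult[OF S uv(2)]])
  have z0c: "z0$2 = det2 u v" "z0$3 = 0" unfolding z0_def by (simp_all add: det2_def algebra_simps)
  define z1 where "z1 = (if det2 u v > 0 then - z0 else z0)"
  have z1L: "z1 \<in> L" unfolding z1_def using z0L sl_neg[OF S z0L] by simp
  have z1c: "z1$2 < 0" "z1$3 = 0" unfolding z1_def using z0c uv(3) by auto
  define P where "P z \<longleftrightarrow> z \<in> L \<and> z$2 \<le> 0 \<and> z$3 \<le> 0 \<and> z$2 + z$3 < 0" for z :: "int^3"
  have "P z1" using z1L z1c P_def by simp
  then obtain zm where zm: "P zm" "\<forall>y. P y \<longrightarrow> nat (-(zm$2+zm$3)) \<le> nat (-(y$2+y$3))"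
    using ex_has_least_nat[of P z1 "\<lambda>z. nat (-(z$2+z$3))"] by blast
  define h where "h = -(zm$2+zm$3)"
  define Q where "Q z \<longleftrightarrow> P z \<and> -(z$2+z$3) = h" for z :: "int^3"
  have "Q zm" using zm h_def Q_def by simp
  then obtain b0 where b0Q: "Q b0" and b0m: "\<forall>y. Q y \<longrightarrow> nat (-(b0$2)) \<le> nat (-(y$2))"
    using ex_has_least_nat[of Q zm "\<lambda>z. nat (-(z$2))"] by blast
  have b0: "b0 \<in> L" "b0$2 \<le> 0" "b0$3 \<le> 0" "b0$2 + b0$3 < 0" "-(b0$2+b0$3) = h"
    using b0Q Q_def P_def by auto
  have hpos: "h > 0" using b0 by simp
  have minh: "\<forall>w\<in>L. w$2 \<le> 0 \<longrightarrow> w$3 \<le> 0 \<longrightarrow> w$2 + w$3 < 0 \<longrightarrow> h \<le> -(w$2+w$3)"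
  proof (intro ballI impI)
    fix w assume "w \<in> L" "w$2 \<le> 0" "w$3 \<le> 0" "w$2 + w$3 < 0"
    then have "P w" using P_def by simp
    then have "nat h \<le> nat (-(w$2+w$3))" using zm h_def by simp
    then show "h \<le> -(w$2+w$3)" using hpos by simp
  qed
  have minp: "\<forall>w\<in>L. w$2 \<le> 0 \<longrightarrow> w$3 \<le> 0 \<longrightarrow> -(w$2+w$3) = h \<longrightarrow> - b0$2 \<le> - w$2"
  proof (intro ballI impI)
    fix w assume "w \<in> L" "w$2 \<le> 0" "w$3 \<le> 0" "-(w$2+w$3) = h"
    then have "Q w" using P_def Q_def hpos by simp
    then have "nat (- b0$2) \<le> nat (- w$2)" using b0m by simp
    then show "- b0$2 \<le> - w$2" using b0 \<open>w$2 \<le> 0\<close> by simp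
  qed
  have "\<exists>z. z \<in> L \<and> det2 b0 z \<noteq> 0"
    using det_zero_lemma[of b0 u v] b0(4) uv by blast
  then obtain x where x: "x \<in> L" "det2 b0 x \<noteq> 0"
    and xm: "\<forall>z. z \<in> L \<and> det2 b0 z \<noteq> 0 \<longrightarrow> nat \<bar>det2 b0 x\<bar> \<le> nat \<bar>det2 b0 z\<bar>"
    using ex_has_least_nat[of "\<lambda>z. z \<in> L \<and> det2 b0 z \<noteq> 0" _ "\<lambda>z. nat \<bar>det2 b0 z\<bar>"] by blast
  define x' where "x' = (if det2 b0 x > 0 then x else - x)"
  have x'L: "x' \<in> L" unfolding x'_def using x(1) sl_neg[OF S x(1)] by simp
  have dx': "det2 b0 x' = \<bar>det2 b0 x\<bar>" unfolding x'_def using x by (auto simp: det2_simps)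
  define k where "k = (x'$2 + x'$3) div h"
  define y where "y = x' + k *s b0"
  have yL: "y \<in> L" unfolding y_def by (rule sl_add[OF S x'L sl_smult[OF S b0(1)]])
  have dy: "det2 b0 y = \<bar>det2 b0 x\<bar>" unfolding y_def using dx' by (simp add: det2_simps)
  have hdef: "h = -(b0$2+b0$3)" using b0(5) by simp
  have "y$2 + y$3 = (x'$2 + x'$3) - (x'$2 + x'$3) div h * h"
    unfolding y_def k_def by (simp add: hdef algebra_simps)
  also have "\<dots> = (x'$2 + x'$3) mod h" by (rule minus_div_mult_eq_mod)
  finally have ysum: "y$2 + y$3 = (x'$2 + x'$3) mod h" .
  have ys: "0 \<le> y$2 + y$3" "y$2 + y$3 < h" using ysum hpos by auto
  have dpos: "det2 b0 y > 0" using dy x by simp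
  have minD: "\<forall>z\<in>L. det2 b0 z \<noteq> 0 \<longrightarrow> det2 b0 y \<le> \<bar>det2 b0 z\<bar>"
  proof (intro ballI impI)
    fix z assume "z \<in> L" "det2 b0 z \<noteq> 0"
    then have "nat \<bar>det2 b0 x\<bar> \<le> nat \<bar>det2 b0 z\<bar>" using xm by blast
    then show "det2 b0 y \<le> \<bar>det2 b0 z\<bar>" using dy by simp
  qed
  have minh': "\<forall>w\<in>L. w$2 \<le> 0 \<longrightarrow> w$3 \<le> 0 \<longrightarrow> w$2 + w$3 < 0 \<longrightarrow> -(b0$2+b0$3) \<le> -(w$2+w$3)"
    using minh b0(5) by simp
  have basis: "is_basis2 L b0 y"
    using basis_lemma[OF S A b0(1-4) minh' yL dpos minD] .
  have dyf: "b0$2 * y$3 - b0$3 * y$2 > 0" using dpos det2_def by simp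
  have t0: "y$3 \<le> 0"
  proof (rule ccontr)
    assume "\<not> y$3 \<le> 0"
    then have tp: "y$3 > 0" by simp
    have "b0$2 * y$3 \<le> 0" using tp b0(2) by (simp add: mult_nonpos_nonneg)
    then have "b0$3 * y$2 < 0" using dyf by linarith
    have sp: "y$2 > 0"
    proof (rule ccontr)
      assume "\<not> y$2 > 0"
      then have "y$2 \<le> 0" by simp
      then have "b0$3 * y$2 \<ge> 0" using b0(3) by (simp add: mult_nonpos_nonpos)
      then show False using \<open>b0$3 * y$2 < 0\<close> by simp
    qed
    have "-y \<in> L" by (rule sl_neg[OF S yL])
    then have "h \<le> -((-y)$2 + (-y)$3)" using minh[rule_format, of "-y"] sp tp by simp
    then have "h \<le> y$2 + y$3" by simp
    then show False using ys by simp
  qed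
  have s0: "y$2 \<ge> - b0$2"
  proof (rule ccontr)
    assume "\<not> y$2 \<ge> - b0$2"
    then have sa: "y$2 + b0$2 < 0" by simp
    have wL: "y + b0 \<in> L" by (rule sl_add[OF S yL b0(1)])
    have "h \<le> -((y+b0)$2 + (y+b0)$3)" using minh[rule_format, OF wL] sa t0 b0(3) by simp
    then have st: "y$2 + y$3 = 0" using ys b0(5) by simp
    have "-((y+b0)$2 + (y+b0)$3) = h" using st b0(5) by simp
    then have "- b0$2 \<le> - (y+b0)$2" using minp[rule_format, OF wL] sa t0 b0(3) by simp
    then have "y$2 \<le> 0" by simp
    then have "y$2 = 0" "y$3 = 0" using st t0 by auto
    then show False using dyf by simp
  qed
  have y1: "y$1 = - y$2 - y$3" using A2D yL A by auto
  have b01: "b0$1 = - b0$2 - b0$3" using A2D b0(1) A by auto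
  show ?thesis
  proof (intro exI conjI)
    show "is_basis2 L b0 y" by (rule basis)
    show "let b = (\<lambda>k::3. if k = 1 then b0 else if k = 2 then y else - b0 - y)
            in \<forall>i j :: 3. i \<noteq> j \<longrightarrow> b i $ j \<le> 0"
    proof -
      have c: "b0$2 \<le> 0" "b0$3 \<le> 0" "y$1 \<le> 0" "y$3 \<le> 0" "(- b0 - y)$1 \<le> 0" "(- b0 - y)$2 \<le> 0"
        using b0 ys t0 s0 y1 b01 by simp_all
      have n: "(1::3) \<noteq> 2" "(1::3) \<noteq> 3" "(2::3) \<noteq> 3" by simp_all
      show ?thesis unfolding Let_def forall_3 using c n by (simp only: if_True if_False n n[symmetric] simp_thms)
    qed
  qed
qed

end
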